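(* Let $p\ge 5$ be a prime. Then $H^1(\mathrm{Alt}(5),X_{\{3\}})\cong C_3$ (here $p=5$), and $H^1(\mathrm{Alt}(p),D_{\{q\}})=0$ for all primes $q$ with $(p,q)\neq(5,3)$.
   Context: $\mathrm{Alt}(p)$ is identified with the group of permutation matrices of even permutations (via $\alpha\mapsto[\delta_{i\alpha,j}]_{i,j}$), acting by conjugation on the group $\mathrm{D}(p,\mathbb{C})$ of invertible diagonal matrices. $D$ is the torsion subgroup of $\mathrm{D}(p,\mathbb{C})$ and $D_{\{q\}}$ its subgroup of elements of $q$-power order. $X=\mathrm{SL}(p,\mathbb{C})\cap\mathrm{D}(p,\mathbb{C})$ and $X_{\{3\}}$ its subgroup of elements of $3$-power order (for $p=5$). *)

theory Defs
  imports Complex_Main "HOL-Algebra.Algebra" "HOL-Combinatorics.Permutations"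
begin

text \<open>It is identified with the group of permutation matrices via sigma \<mapsto> P_(sigma^-1),
  a homomorphism for \<circ>; conjugation of a diagonal matrix diag(d) by it yields
  diag(i \<mapsto> d (inv sigma i)).\<close>
definition Alt :: "nat \<Rightarrow> (nat \<Rightarrow> nat) set" where
  "Alt p = {\<sigma>. \<sigma> permutes {..<p} \<and> evenperm \<sigma>}"

text \<open>Diagonal matrices are represented by their diagonal (entries at indices < p; value 1 elsewhere).\<close>
definition act :: "(nat \<Rightarrow> nat) \<Rightarrow> (nat \<Rightarrow> complex) \<Rightarrow> (nat \<Rightarrow> complex)" where
  "act \<sigma> d = (\<lambda>i. d (Hilbert_Choice.inv \<sigma> i))"

definition Dq :: "nat \<Rightarrow> nat \<Rightarrow> (nat \<Rightarrow> complex) set" where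
  "Dq p q = {d. (\<forall>i. p \<le> i \<longrightarrow> d i = 1) \<and> (\<forall>i<p. d i \<noteq> 0) \<and>
                (\<exists>k. \<forall>i<p. d i ^ (q ^ k) = 1)}"

definition Xq :: "nat \<Rightarrow> nat \<Rightarrow> (nat \<Rightarrow> complex) set" where
  "Xq p q = {d \<in> Dq p q. (\<Prod>i<p. d i) = 1}"

definition Z1 :: "(nat \<Rightarrow> complex) set \<Rightarrow> nat \<Rightarrow> ((nat \<Rightarrow> nat) \<Rightarrow> nat \<Rightarrow> complex) set" where
  "Z1 M p = {f. (\<forall>\<sigma>\<in>Alt p. f \<sigma> \<in> M) \<and> (\<forall>\<sigma>. \<sigma> \<notin> Alt p \<longrightarrow> f \<sigma> = (\<lambda>i. 1)) \<and>
               (\<forall>\<sigma>\<in>Alt p. \<forall>\<tau>\<in>Alt p. f (\<sigma> \<circ> \<tau>) = (\<lambda>i. f \<sigma> i * act \<sigma> (f \<tau>) i))}"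

definition B1 :: "(nat \<Rightarrow> complex) set \<Rightarrow> nat \<Rightarrow> ((nat \<Rightarrow> nat) \<Rightarrow> nat \<Rightarrow> complex) set" where
  "B1 M p = {f. \<exists>m\<in>M. \<forall>\<sigma>. f \<sigma> = (if \<sigma> \<in> Alt p then (\<lambda>i. act \<sigma> m i / m i) else (\<lambda>i. 1))}"

definition Z1_group :: "(nat \<Rightarrow> complex) set \<Rightarrow> nat \<Rightarrow> ((nat \<Rightarrow> nat) \<Rightarrow> nat \<Rightarrow> complex) monoid" where
  "Z1_group M p = \<lparr>carrier = Z1 M p, monoid.mult = (\<lambda>f g \<sigma> i. f \<sigma> i * g \<sigma> i), monoid.one = (\<lambda>\<sigma> i. 1)\<rparr>"

definition H1 :: "(nat \<Rightarrow> complex) set \<Rightarrow> nat \<Rightarrow> ((nat \<Rightarrow> nat) \<Rightarrow> nat \<Rightarrow> complex) set monoid" where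
  "H1 M p = Z1_group M p Mod B1 M p"

end

theory Submission
  imports Defs "HOL-Computational_Algebra.Primes"
begin


lemma swap2_step:
  assumes "P \<tau>" "x \<noteq> y" "y \<noteq> z" "x \<in> S" "y \<in> S" "z \<in> S"
    and step: "\<And>\<tau> a b c. P \<tau> \<Longrightarrow> a\<noteq>b \<Longrightarrow> b\<noteq>c \<Longrightarrow> a\<noteq>c \<Longrightarrow> a\<in>S \<Longrightarrow> b\<in>S \<Longrightarrow> c\<in>S \<Longrightarrow> P (\<tau> \<circ> (transpose a b \<circ> transpose b c))"
  shows "P (\<tau> \<circ> (transpose x y \<circ> transpose y z))"
proof (cases "x = z")
  case True
  then have "transpose x y \<circ> transpose y z = id" by (simp add: fun_eq_iff transpose_def)
  then show ?thesis using assms(1) by simp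
next
  case False then show ?thesis using step assms by blast
qed

lemma alt_induct:
  assumes perm: "\<sigma> permutes S" and fin: "finite S" and ev: "evenperm \<sigma>" and base: "P id"
    and step: "\<And>\<tau> a b c. P \<tau> \<Longrightarrow> a\<noteq>b \<Longrightarrow> b\<noteq>c \<Longrightarrow> a\<noteq>c \<Longrightarrow> a\<in>S \<Longrightarrow> b\<in>S \<Longrightarrow> c\<in>S \<Longrightarrow> P (\<tau> \<circ> (transpose a b \<circ> transpose b c))"
  shows "P \<sigma>"
proof -
  obtain m where m: "swapidseq_ext S m \<sigma>" using swapidseq_ext_of_permutation[OF perm fin] by auto
  have "even m" using swapidseq_ext_imp_swapidseq[OF m] ev evenperm_unique by blast
  then obtain k where k: "m = 2*k" by auto
  have "\<And>p. swapidseq_ext S (2*k) p \<Longrightarrow> P p"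
  proof (induct k)
    case 0
    then have "p = id" using swapidseq_ext_zero_imp_id by simp
    then show ?case using base by (subst \<open>p = id\<close>)
  next
    case (Suc j)
    have arith: "2 * (Suc j) - (Suc (Suc 0)) = 2 * j" and le: "Suc (Suc 0) \<le> 2 * Suc j" by auto
    obtain q r U V where q: "swapidseq_ext U (2 * j) q" and r: "swapidseq_ext V (Suc (Suc 0)) r"
            and p: "p = q \<circ> r" and UV: "U \<union> V = S"
      using split_swapidseq_ext[OF le Suc(2)] unfolding arith by metis
    have "swapidseq_ext S (2 * j) q"
      using UV q swapidseq_ext_finite_expansion[OF swapidseq_ext_finite[OF r] q] by simp
    then have Pq: "P q" using Suc(1) by blast
    obtain a b q' where ab: "a \<noteq> b" "a \<in> V" "b \<in> V"
          and q': "swapidseq_ext V (Suc 0) q'" "r = transpose a b \<circ> q'"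
      using swapidseq_ext_backwards'[OF r] by auto
    obtain c d where cd: "c \<noteq> d" "c \<in> V" "d \<in> V" and rr: "r = transpose a b \<circ> transpose c d"
      using swapidseq_ext_backwards'[OF q'(1)] swapidseq_ext_zero_imp_id unfolding q'(2) by fastforce
    have VS: "V \<subseteq> S" using UV by auto
    have aS: "a \<in> S" "b \<in> S" "c \<in> S" "d \<in> S" using VS ab cd by auto
    show ?case
    proof (cases "b = c")
      case True
      have "P (q \<circ> (transpose a b \<circ> transpose b d))"
        using swap2_step[where P=P and S=S, OF Pq ab(1) _ aS(1) aS(2) aS(4) step] True cd by blast
      then show ?thesis unfolding p rr True .
    next
      case False
      have r2: "r = (transpose a b \<circ> transpose b c) \<circ> (transpose b c \<circ> transpose c d)"
        unfolding rr by (simp add: fun_eq_iff transpose_def)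
      have "P (q \<circ> (transpose a b \<circ> transpose b c))"
        using swap2_step[where P=P and S=S, OF Pq ab(1) False aS(1) aS(2) aS(3) step] by blast
      then have "P ((q \<circ> (transpose a b \<circ> transpose b c)) \<circ> (transpose b c \<circ> transpose c d))"
        using swap2_step[where P=P and S=S, OF _ False cd(1) aS(2) aS(3) aS(4) step] by blast
      then show ?thesis unfolding p r2 by (simp only: o_assoc)
    qed
  qed
  then show ?thesis using m k by simp
qed

abbreviation hinv :: "(nat \<Rightarrow> nat) \<Rightarrow> nat \<Rightarrow> nat" where "hinv \<equiv> Hilbert_Choice.inv"

lemma alt_permutes: "\<sigma> \<in> Alt p \<Longrightarrow> \<sigma> permutes {..<p}"
  by (simp add: Alt_def)

lemma alt_even: "\<sigma> \<in> Alt p \<Longrightarrow> evenperm \<sigma>"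
  by (simp add: Alt_def)

lemma alt_perm: "\<sigma> \<in> Alt p \<Longrightarrow> permutation \<sigma>"
  using alt_permutes permutation_permutes by blast

lemma alt_id: "id \<in> Alt p"
  by (simp add: Alt_def permutes_id)

lemma alt_comp: "\<sigma> \<in> Alt p \<Longrightarrow> \<tau> \<in> Alt p \<Longrightarrow> \<sigma> \<circ> \<tau> \<in> Alt p"
  unfolding Alt_def using permutes_compose evenperm_comp permutation_permutes
  by (metis (mono_tags, lifting) finite_lessThan mem_Collect_eq)

lemma alt_inv: "\<sigma> \<in> Alt p \<Longrightarrow> hinv \<sigma> \<in> Alt p"
  unfolding Alt_def using permutes_inv evenperm_inv permutation_permutes
  by (metis (mono_tags, lifting) finite_lessThan mem_Collect_eq)

lemma alt_mono: "n \<le> p \<Longrightarrow> \<sigma> \<in> Alt n \<Longrightarrow> \<sigma> \<in> Alt p"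
  unfolding Alt_def using permutes_subset[of \<sigma> "{..<n}" "{..<p}"] by auto

lemma alt_fix: "\<sigma> \<in> Alt (Suc n) \<Longrightarrow> \<sigma> n = n \<Longrightarrow> \<sigma> \<in> Alt n"
  unfolding Alt_def using permutes_superset[of \<sigma> "{..<Suc n}" "{..<n}"]
  by (auto simp: less_Suc_eq)

lemma alt_out: "\<sigma> \<in> Alt p \<Longrightarrow> \<not> i < p \<Longrightarrow> \<sigma> i = i"
  using alt_permutes permutes_not_in by fastforce

lemma alt_inv_out: "\<sigma> \<in> Alt p \<Longrightarrow> \<not> i < p \<Longrightarrow> hinv \<sigma> i = i"
  using alt_inv alt_out by blast

lemma alt_in: "\<sigma> \<in> Alt p \<Longrightarrow> i < p \<Longrightarrow> \<sigma> i < p"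
  using alt_permutes permutes_in_image by fastforce

lemma alt_inv_in: "\<sigma> \<in> Alt p \<Longrightarrow> i < p \<Longrightarrow> hinv \<sigma> i < p"
  using alt_inv alt_in by blast

lemma alt_inv_apply: "\<sigma> \<in> Alt p \<Longrightarrow> \<sigma> (hinv \<sigma> i) = i"  "\<sigma> \<in> Alt p \<Longrightarrow> hinv \<sigma> (\<sigma> i) = i"
  using alt_permutes permutes_inverses by fastforce+

lemma alt_inv_comp: "\<sigma> \<in> Alt p \<Longrightarrow> \<tau> \<in> Alt p \<Longrightarrow> hinv (\<sigma> \<circ> \<tau>) = hinv \<tau> \<circ> hinv \<sigma>"
  using alt_permutes permutes_bij o_inv_distrib by metis

lemma alt_3cyc: "a < n \<Longrightarrow> b < n \<Longrightarrow> c < n \<Longrightarrow> a \<noteq> b \<Longrightarrow> b \<noteq> c \<Longrightarrow> transpose a b \<circ> transpose b c \<in> Alt n"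
  unfolding Alt_def
  by (auto intro!: permutes_compose permutes_swap_id simp: evenperm_comp evenperm_swap permutation_swap_id)

lemma alt_2swap: "a < n \<Longrightarrow> b < n \<Longrightarrow> c < n \<Longrightarrow> d < n \<Longrightarrow> a \<noteq> b \<Longrightarrow> c \<noteq> d \<Longrightarrow> transpose a b \<circ> transpose c d \<in> Alt n"
  unfolding Alt_def
  by (auto intro!: permutes_compose permutes_swap_id simp: evenperm_comp evenperm_swap permutation_swap_id)

lemma cyc_cube: "a \<noteq> b \<Longrightarrow> b \<noteq> c \<Longrightarrow> a \<noteq> c \<Longrightarrow>
   (transpose a b \<circ> transpose b c) \<circ> (transpose a b \<circ> transpose b c) \<circ> (transpose a b \<circ> transpose b c) = id"
  by (rule ext, simp only: o_apply id_apply, (case_tac "x=a"; case_tac "x=b"; case_tac "x=c")) (simp_all add: transpose_def)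

definition mulon :: "nat \<Rightarrow> ((nat \<Rightarrow> nat) \<Rightarrow> complex) \<Rightarrow> bool" where
  "mulon n \<psi> \<longleftrightarrow> \<psi> id = 1 \<and> (\<forall>\<sigma>\<in>Alt n. \<forall>\<tau>\<in>Alt n. \<psi> (\<sigma> \<circ> \<tau>) = \<psi> \<sigma> * \<psi> \<tau>)"

lemma triv_from_3cycles:
  assumes m: "mulon n \<psi>"
    and cyc: "\<And>a b c. a < n \<Longrightarrow> b < n \<Longrightarrow> c < n \<Longrightarrow> a \<noteq> b \<Longrightarrow> b \<noteq> c \<Longrightarrow> a \<noteq> c \<Longrightarrow> \<psi> (transpose a b \<circ> transpose b c) = 1"
    and s: "\<sigma> \<in> Alt n"
  shows "\<psi> \<sigma> = 1"
proof -
  have "\<sigma> \<in> Alt n \<and> \<psi> \<sigma> = 1"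
  proof (rule alt_induct[OF alt_permutes[OF s] _ alt_even[OF s], where P="\<lambda>\<tau>. \<tau> \<in> Alt n \<and> \<psi> \<tau> = 1"])
    show "id \<in> Alt n \<and> \<psi> id = 1" using m alt_id unfolding mulon_def by auto
  next
    fix \<tau> a b c assume h: "\<tau> \<in> Alt n \<and> \<psi> \<tau> = 1" "a \<noteq> b" "b \<noteq> c" "a \<noteq> c" "a \<in> {..<n}" "b \<in> {..<n}" "c \<in> {..<n}"
    then have t: "transpose a b \<circ> transpose b c \<in> Alt n" using alt_3cyc by auto
    show "\<tau> \<circ> (transpose a b \<circ> transpose b c) \<in> Alt n \<and> \<psi> (\<tau> \<circ> (transpose a b \<circ> transpose b c)) = 1"
      using h t alt_comp m cyc unfolding mulon_def by auto
  qed auto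
  then show ?thesis by simp
qed

lemma psi_cube:
  assumes m: "mulon n \<psi>" and h: "a < n" "b < n" "c < n" "a \<noteq> b" "b \<noteq> c" "a \<noteq> c"
  shows "\<psi> (transpose a b \<circ> transpose b c) ^ 3 = 1"
proof -
  let ?t = "transpose a b \<circ> transpose b c"
  have t: "?t \<in> Alt n" using alt_3cyc h by auto
  have "\<psi> (?t \<circ> ?t \<circ> ?t) = \<psi> ?t ^ 3"
    using m t alt_comp unfolding mulon_def by (simp add: power3_eq_cube)
  then show ?thesis using cyc_cube[OF h(4-6)] m unfolding mulon_def by simp
qed

lemma coprime_root:
  fixes z :: complex
  assumes "z ^ a = 1" "z ^ b = 1" "coprime a b" "a > 0"
  shows "z = 1"
proof -
  obtain u v where uv: "a * u = b * v + gcd a b" using bezout_nat[of a b] assms by auto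
  then have uv: "a * u = b * v + 1" using assms(3) by simp
  have "z ^ (a * u) = 1" using assms by (simp add: power_mult)
  moreover have "z ^ (b * v + 1) = z" using assms by (simp add: power_mult)
  ultimately show ?thesis using uv by simp
qed

lemma psi_3cycle_ge5:
  assumes m: "mulon n \<psi>" and n: "n \<ge> 5" and h: "a < n" "b < n" "c < n" "a \<noteq> b" "b \<noteq> c" "a \<noteq> c"
  shows "\<psi> (transpose a b \<circ> transpose b c) = 1"
proof -
  let ?t = "transpose a b \<circ> transpose b c"
  let ?t' = "transpose b c \<circ> transpose a b"
  have "card ({..<n} - {a,b,c}) = n - 3"
    using h by (subst card_Diff_subset) auto
  then have "card ({..<n} - {a,b,c}) \<ge> 2" using n by simp
  then obtain d e where de: "d \<in> {..<n} - {a,b,c}" "e \<in> {..<n} - {a,b,c}" "d \<noteq> e"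
    by (metis One_nat_def card_le_Suc0_iff_eq finite_Diff finite_lessThan not_less_eq_eq numeral_2_eq_2)
  let ?g = "transpose a b \<circ> transpose d e"
  have g: "?g \<in> Alt n" using alt_2swap h de by auto
  have t: "?t \<in> Alt n" using alt_3cyc h by auto
  have t': "?t' \<in> Alt n" using alt_2swap h by auto
  have d: "d \<noteq> a" "d \<noteq> b" "d \<noteq> c" "e \<noteq> a" "e \<noteq> b" "e \<noteq> c" "d \<noteq> e" using de by auto
  have gg: "?g \<circ> ?g = id"
  proof
    fix x show "(?g \<circ> ?g) x = id x"
    using d h by (cases "x=a"; cases "x=b"; cases "x=d"; cases "x=e") (simp_all add: transpose_def)
  qed
  have conj: "?g \<circ> ?t \<circ> ?g = ?t'"
  proof
    fix x show "(?g \<circ> ?t \<circ> ?g) x = ?t' x"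
    using d h by (cases "x=a"; cases "x=b"; cases "x=c"; cases "x=d"; cases "x=e") (simp_all add: transpose_def)
  qed
  have tt: "?t \<circ> ?t' = id"
  proof
    fix x show "(?t \<circ> ?t') x = id x"
    using d h by (cases "x=a"; cases "x=b"; cases "x=c") (simp_all add: transpose_def)
  qed
  have M: "\<And>x y. x \<in> Alt n \<Longrightarrow> y \<in> Alt n \<Longrightarrow> \<psi> (x \<circ> y) = \<psi> x * \<psi> y" and I: "\<psi> id = 1"
    using m unfolding mulon_def by auto
  have "\<psi> ?g * \<psi> ?g = 1" using M[OF g g] gg I by simp
  moreover have "\<psi> ?t' = \<psi> ?g * \<psi> ?t * \<psi> ?g" using M[OF alt_comp[OF g t] g] M[OF g t] conj by simp
  ultimately have "\<psi> ?t' = \<psi> ?t" by (simp add: algebra_simps)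
  then have "\<psi> ?t ^ 2 = 1" using M[OF t t'] tt I by (simp add: power2_eq_square)
  moreover have "\<psi> ?t ^ 3 = 1" using psi_cube[OF m h] .
  ultimately show ?thesis using coprime_root[of "\<psi> ?t" 3 2] by simp
qed



lemma Dq_out: "d \<in> Dq p q \<Longrightarrow> \<not> i < p \<Longrightarrow> d i = 1"
  by (simp add: Dq_def)
lemma Dq_nz: "d \<in> Dq p q \<Longrightarrow> i < p \<Longrightarrow> d i \<noteq> 0"
  by (simp add: Dq_def)
lemma Dq_nz': "d \<in> Dq p q \<Longrightarrow> d i \<noteq> 0"
  by (cases "i < p") (simp_all add: Dq_def)
lemma Dq_pow: "d \<in> Dq p q \<Longrightarrow> \<exists>k. \<forall>i<p. d i ^ (q ^ k) = 1"
  by (simp add: Dq_def)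
lemma Xq_Dq: "Xq p q \<subseteq> Dq p q"
  by (auto simp: Xq_def)

lemma z1_in: "f \<in> Z1 M p \<Longrightarrow> \<sigma> \<in> Alt p \<Longrightarrow> f \<sigma> \<in> M"
  by (simp add: Z1_def)
lemma z1_out: "f \<in> Z1 M p \<Longrightarrow> \<sigma> \<notin> Alt p \<Longrightarrow> f \<sigma> = (\<lambda>i. 1)"
  by (simp add: Z1_def)
lemma z1_cocyc: "f \<in> Z1 M p \<Longrightarrow> \<sigma> \<in> Alt p \<Longrightarrow> \<tau> \<in> Alt p \<Longrightarrow> f (\<sigma> \<circ> \<tau>) i = f \<sigma> i * f \<tau> (hinv \<sigma> i)"
  by (simp add: Z1_def act_def)

lemma z1_id:
  assumes f: "f \<in> Z1 M p" and M: "M \<subseteq> Dq p q"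
  shows "f id i = 1"
proof -
  have "f (id \<circ> id) i = f id i * f id i" using z1_cocyc[OF f alt_id alt_id] by simp
  then have "f id i * f id i = f id i * 1" by simp
  moreover have "f id i \<noteq> 0" using Dq_nz' z1_in[OF f alt_id] M by blast
  ultimately show ?thesis by (metis mult_left_cancel)
qed

lemma psi_mulon:
  assumes f: "f \<in> Z1 M (Suc n)" and M: "M \<subseteq> Dq (Suc n) q"
  shows "mulon n (\<lambda>h. f h n)"
  unfolding mulon_def
proof (intro conjI ballI)
  show "f id n = 1" using z1_id[OF f M] .
  fix \<sigma> \<tau> assume s: "\<sigma> \<in> Alt n" and t: "\<tau> \<in> Alt n"
  have s': "\<sigma> \<in> Alt (Suc n)" and t': "\<tau> \<in> Alt (Suc n)" using alt_mono[of n "Suc n"] s t by auto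
  have "hinv \<sigma> n = n" using alt_inv_out[OF s] by simp
  then show "f (\<sigma> \<circ> \<tau>) n = f \<sigma> n * f \<tau> n" using z1_cocyc[OF f s' t'] by simp
qed

lemma reps:
  assumes n: "n \<ge> 3" and i: "i < Suc n"
  shows "\<exists>g\<in>Alt (Suc n). g n = i"
proof (cases "i = n")
  case True then show ?thesis using alt_id[of "Suc n"] by (intro bexI[of _ id]) auto
next
  case False
  then have i': "i < n" using i by simp
  define a where "a = (if i = 0 then 1 else 0::nat)"
  define b where "b = (if i = 2 then 1 else 2::nat)"
  have ab: "a \<noteq> b" "a \<noteq> i" "b \<noteq> i" "a < n" "b < n" using n by (auto simp: a_def b_def)
  let ?g = "transpose i n \<circ> transpose a b"
  have "?g \<in> Alt (Suc n)" using alt_2swap[of i "Suc n" n a b] ab i' by auto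
  moreover have "?g n = i" using ab by simp
  ultimately show ?thesis by blast
qed

lemma shapiro:
  assumes f: "f \<in> Z1 (Dq (Suc n) q) (Suc n)" and n: "n \<ge> 3" and triv: "\<forall>h\<in>Alt n. f h n = 1"
  shows "\<exists>m\<in>Dq (Suc n) q. \<forall>\<sigma>\<in>Alt (Suc n). f \<sigma> = (\<lambda>i. act \<sigma> m i / m i)"
proof -
  define g where "g i = (SOME g. g \<in> Alt (Suc n) \<and> g n = i)" for i
  have g: "g i \<in> Alt (Suc n)" "g i n = i" if "i < Suc n" for i
    using someI_ex[OF reps[OF n that, unfolded Bex_def]] unfolding g_def by auto
  define m where "m i = (if i < Suc n then 1 / f (g i) i else 1)" for i
  have fD: "f \<sigma> \<in> Dq (Suc n) q" if "\<sigma> \<in> Alt (Suc n)" for \<sigma> using z1_in[OF f that] .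
  have key: "f \<sigma> i = act \<sigma> m i / m i" if s: "\<sigma> \<in> Alt (Suc n)" for \<sigma> i
  proof (cases "i < Suc n")
    case False
    then show ?thesis using alt_inv_out[OF s False] Dq_out[OF fD[OF s] False]
      by (simp add: act_def m_def)
  next
    case True
    define j where "j = hinv \<sigma> i"
    have j: "j < Suc n" using alt_inv_in[OF s True] j_def by simp
    define h where "h = hinv (g i) \<circ> \<sigma> \<circ> g j"
    have hA: "h \<in> Alt (Suc n)" unfolding h_def using alt_comp alt_inv g(1) j True s by metis
    have gi_inv: "hinv (g i) i = n" using alt_inv_apply(2)[OF g(1)[OF True], of n] g(2)[OF True] by simp
    have "h n = n" unfolding h_def using g(2)[OF j] alt_inv_apply(1)[OF s] j_def gi_inv by simp
    then have hn: "h \<in> Alt n" using alt_fix hA by blast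
    have comp: "g i \<circ> h = \<sigma> \<circ> g j"
      unfolding h_def using permutes_inv_o(1)[OF alt_permutes[OF g(1)[OF True]]] by (simp add: o_assoc)
    have e1: "f (\<sigma> \<circ> g j) i = f \<sigma> i * f (g j) j"
      using z1_cocyc[OF f s g(1)[OF j]] j_def by simp
    have e2: "f (g i \<circ> h) i = f (g i) i"
      using z1_cocyc[OF f g(1)[OF True] hA] gi_inv triv hn by simp
    have nz: "f (g j) j \<noteq> 0" "f (g i) i \<noteq> 0" using Dq_nz' fD g(1) j True by blast+
    have "f \<sigma> i = f (g i) i / f (g j) j" using e1 e2 comp nz by (simp add: field_simps)
    then show ?thesis using j True nz by (simp add: act_def m_def j_def[symmetric])
  qed
  have mD: "m \<in> Dq (Suc n) q"
  proof -
    define kk where "kk i = (SOME k. \<forall>j<Suc n. f (g i) j ^ (q ^ k) = 1)" for i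
    have kk: "f (g i) j ^ (q ^ kk i) = 1" if "i < Suc n" "j < Suc n" for i j
      using someI_ex[OF Dq_pow[OF fD[OF g(1)[OF that(1)]]]] that unfolding kk_def by blast
    define K where "K = (\<Sum>i<Suc n. kk i)"
    have pw: "m i ^ (q ^ K) = 1" if i: "i < Suc n" for i
    proof -
      have le: "kk i \<le> K" unfolding K_def using i by (intro member_le_sum) auto
      have "q ^ K = q ^ kk i * q ^ (K - kk i)" using le by (simp add: power_add[symmetric])
      then have "f (g i) i ^ (q ^ K) = 1" using kk[OF i i] by (simp add: power_mult)
      then show ?thesis using i by (simp add: m_def power_one_over)
    qed
    have nz: "m i \<noteq> 0" for i
      using Dq_nz'[OF fD[OF g(1)], of i i] by (simp add: m_def)
    have out: "\<forall>i. Suc n \<le> i \<longrightarrow> m i = 1" by (simp add: m_def)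
    show ?thesis unfolding Dq_def using pw nz out by blast
  qed
  show ?thesis using key mD by blast
qed

lemma cob_Dq:
  assumes m: "m \<in> Dq p q" and s: "\<sigma> \<in> Alt p"
  shows "(\<lambda>i. act \<sigma> m i / m i) \<in> Dq p q"
proof -
  obtain k where k: "\<forall>i<p. m i ^ (q ^ k) = 1" using Dq_pow[OF m] by blast
  have "(act \<sigma> m i / m i) ^ (q ^ k) = 1" if "i < p" for i
    using k alt_inv_in[OF s that] that by (simp add: act_def power_divide)
  then show ?thesis using m alt_inv_out[OF s] alt_inv_in[OF s] unfolding Dq_def act_def by auto
qed

lemma cob_Xq:
  assumes m: "m \<in> Xq p q" and s: "\<sigma> \<in> Alt p"
  shows "(\<lambda>i. act \<sigma> m i / m i) \<in> Xq p q"
proof -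
  have mD: "m \<in> Dq p q" and pm: "(\<Prod>i<p. m i) = 1" using m by (auto simp: Xq_def)
  have "(\<Prod>i<p. act \<sigma> m i / m i) = (\<Prod>i<p. m (hinv \<sigma> i)) / (\<Prod>i<p. m i)"
    by (simp add: act_def prod_dividef)
  also have "(\<Prod>i<p. m (hinv \<sigma> i)) = (\<Prod>i<p. m i)"
    using prod.permute[OF permutes_inv[OF alt_permutes[OF s]], of m] by (simp add: o_def)
  finally show ?thesis using cob_Dq[OF mD s] pm unfolding Xq_def by simp
qed

lemma cob_Z1:
  assumes M: "M \<subseteq> Dq p q" and cl: "\<And>m \<sigma>. m \<in> M \<Longrightarrow> \<sigma> \<in> Alt p \<Longrightarrow> (\<lambda>i. act \<sigma> m i / m i) \<in> M"
  shows "B1 M p \<subseteq> Z1 M p"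
proof
  fix f assume "f \<in> B1 M p"
  then obtain m where m: "m \<in> M" and fd: "\<And>\<sigma>. f \<sigma> = (if \<sigma> \<in> Alt p then (\<lambda>i. act \<sigma> m i / m i) else (\<lambda>i. 1))"
    unfolding B1_def by blast
  have mD: "m \<in> Dq p q" using m M by blast
  have nz: "m (hinv \<sigma> i) \<noteq> 0" if "\<sigma> \<in> Alt p" for \<sigma> i
    using Dq_nz' mD by blast
  have "f (\<sigma> \<circ> \<tau>) = (\<lambda>i. f \<sigma> i * act \<sigma> (f \<tau>) i)" if s: "\<sigma> \<in> Alt p" and t: "\<tau> \<in> Alt p" for \<sigma> \<tau>
  proof
    fix i
    have st: "\<sigma> \<circ> \<tau> \<in> Alt p" using alt_comp s t by blast
    show "f (\<sigma> \<circ> \<tau>) i = f \<sigma> i * act \<sigma> (f \<tau>) i"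
      using fd[of "\<sigma> \<circ> \<tau>"] fd[of \<sigma>] fd[of \<tau>] st s t nz[OF s, of i] Dq_nz'[OF mD, of i]
      by (simp add: act_def alt_inv_comp[OF s t])
  qed
  then show "f \<in> Z1 M p" unfolding Z1_def using fd cl m by auto
qed

lemma B1_Dq: "B1 (Dq p q) p \<subseteq> Z1 (Dq p q) p"
  by (rule cob_Z1) (auto intro: cob_Dq)

lemma B1_Xq: "B1 (Xq p q) p \<subseteq> Z1 (Xq p q) p"
  by (rule cob_Z1[OF Xq_Dq]) (auto intro: cob_Xq)



lemma to_B1:
  assumes f: "f \<in> Z1 M p" and m: "m \<in> M" and e: "\<forall>\<sigma>\<in>Alt p. f \<sigma> = (\<lambda>i. act \<sigma> m i / m i)"
  shows "f \<in> B1 M p"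
  unfolding B1_def using m e z1_out[OF f] by (intro CollectI bexI[of _ m]) auto

lemma coprime3:
  assumes q: "Factorial_Ring.prime (q::nat)" "q \<noteq> 3" shows "coprime 3 (q ^ k)"
proof -
  have "\<not> q dvd 3"
  proof
    assume d: "q dvd 3"
    then have "q \<le> 3" by (simp add: dvd_imp_le)
    moreover have "q \<ge> 2" using q prime_ge_2_nat by blast
    ultimately have "q = 2" using q by auto
    then show False using d by simp
  qed
  then have "coprime q 3" using q prime_imp_coprime by blast
  then show ?thesis by (simp add: coprime_commute)
qed

lemma part2:
  assumes p: "Factorial_Ring.prime (p::nat)" "p \<ge> 5" and q: "Factorial_Ring.prime (q::nat)" and pq: "(p, q) \<noteq> (5, 3)"
  shows "Z1 (Dq p q) p = B1 (Dq p q) p"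
proof
  show "B1 (Dq p q) p \<subseteq> Z1 (Dq p q) p" by (rule B1_Dq)
  obtain n where pn: "p = Suc n" using p by (cases p) auto
  have n4: "n \<ge> 4" using p pn by simp
  have n5: "q \<noteq> 3" if "n < 5"
  proof -
    have "n = 4" using that n4 by simp
    then show ?thesis using pq pn by auto
  qed
  have n6: "n \<noteq> 5"
  proof
    assume "n = 5"
    then have p6: "p = 6" using pn by simp
    then have d: "2 dvd p" by simp
    have "\<forall>m. m dvd p \<longrightarrow> m = 1 \<or> m = p" using p(1) prime_nat_iff by blast
    then have "2 = (1::nat) \<or> 2 = p" using d by blast
    then show False using p6 by simp
  qed
  show "Z1 (Dq p q) p \<subseteq> B1 (Dq p q) p"
  proof
    fix f assume f: "f \<in> Z1 (Dq p q) p"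
    then have f': "f \<in> Z1 (Dq (Suc n) q) (Suc n)" using pn by simp
    have mo: "mulon n (\<lambda>h. f h n)" using psi_mulon[OF f'] by blast
    have triv: "\<forall>h\<in>Alt n. f h n = 1"
    proof
      fix h assume h: "h \<in> Alt n"
      show "f h n = 1"
      proof (rule triv_from_3cycles[OF mo _ h])
        fix a b c assume abc: "a < n" "b < n" "c < n" "a \<noteq> b" "b \<noteq> c" "a \<noteq> c"
        show "f (transpose a b \<circ> transpose b c) n = 1"
        proof (cases "n \<ge> 5")
          case True
          then show ?thesis using psi_3cycle_ge5[OF mo True abc] by simp
        next
          case False
          have t: "transpose a b \<circ> transpose b c \<in> Alt (Suc n)" using alt_3cyc abc by (meson less_SucI)
          obtain k where k: "\<forall>i<Suc n. f (transpose a b \<circ> transpose b c) i ^ (q ^ k) = 1"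
            using Dq_pow[OF z1_in[OF f' t]] by blast
          have "f (transpose a b \<circ> transpose b c) n ^ 3 = 1" using psi_cube[OF mo abc] by simp
          moreover have "f (transpose a b \<circ> transpose b c) n ^ (q ^ k) = 1" using k by simp
          moreover have "coprime 3 (q ^ k)" using coprime3[OF q n5] False by simp
          ultimately show ?thesis using coprime_root[of _ 3 "q ^ k"] by simp
        qed
      qed
    qed
    obtain m where m: "m \<in> Dq (Suc n) q" "\<forall>\<sigma>\<in>Alt (Suc n). f \<sigma> = (\<lambda>i. act \<sigma> m i / m i)"
      using shapiro[OF f' _ triv] n4 by auto
    show "f \<in> B1 (Dq p q) p" using to_B1[OF f] m pn by simp
  qed
qed



definition pi4 :: "nat \<Rightarrow> nat \<Rightarrow> nat" where
  "pi4 u v = (if u = 0 then v else if v = 0 then u else 6 - u - v)"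
definition samep :: "nat \<Rightarrow> nat \<Rightarrow> nat \<Rightarrow> nat \<Rightarrow> bool" where
  "samep u v w z \<longleftrightarrow> ((u = w \<and> v = z) \<or> (u = z \<and> v = w) \<or> (u \<noteq> w \<and> u \<noteq> z \<and> v \<noteq> w \<and> v \<noteq> z))"

lemma lt4: "(x::nat) < 4 \<longleftrightarrow> x = 0 \<or> x = 1 \<or> x = 2 \<or> x = 3" by auto

lemma pi4_prop: "u < 4 \<Longrightarrow> v < 4 \<Longrightarrow> u \<noteq> v \<Longrightarrow> pi4 u v \<in> {1,2,3} \<and> samep u v 0 (pi4 u v)"
  unfolding lt4 by (auto simp: pi4_def samep_def)

lemma pi4_uniq: "u < 4 \<Longrightarrow> v < 4 \<Longrightarrow> u \<noteq> v \<Longrightarrow> j \<in> {1,2,3} \<Longrightarrow> samep u v 0 j \<Longrightarrow> j = pi4 u v"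
  unfolding lt4 by (auto simp: pi4_def samep_def)

lemma compl2:
  assumes "u<4" "v<4" "w<4" "z<4" "u\<noteq>v" "w\<noteq>z" "u\<noteq>w" "u\<noteq>z" "v\<noteq>w" "v\<noteq>z"
  shows "{u,v} = {..<4::nat} - {w,z}"
proof (rule card_subset_eq)
  show "finite ({..<4::nat} - {w,z})" by simp
  show "{u,v} \<subseteq> {..<4} - {w,z}" using assms by auto
  have "card ({..<4::nat} - {w,z}) = 4 - 2" using assms by (subst card_Diff_subset) auto
  then show "card {u,v} = card ({..<4} - {w,z})" using assms by simp
qed

lemma samep_trans:
  assumes "u<4" "v<4" "w<4" "z<4" "x<4" "y<4" "u\<noteq>v" "w\<noteq>z" "x\<noteq>y"
    and s1: "samep u v w z" and s2: "samep w z x y"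
  shows "samep u v x y"
proof -
  consider "u = w \<and> v = z" | "u = z \<and> v = w" | "u \<noteq> w \<and> u \<noteq> z \<and> v \<noteq> w \<and> v \<noteq> z" using s1 unfolding samep_def by blast
  then show ?thesis
  proof cases
    case 3
    consider "w = x \<and> z = y" | "w = y \<and> z = x" | "w \<noteq> x \<and> w \<noteq> y \<and> z \<noteq> x \<and> z \<noteq> y" using s2 unfolding samep_def by blast
    then show ?thesis
    proof cases
      case 3
      have "{x,y} = {..<4} - {w,z}" using compl2[of x y w z] assms 3 by auto
      moreover have "{u,v} = {..<4} - {w,z}" using compl2[of u v w z] assms \<open>u \<noteq> w \<and> u \<noteq> z \<and> v \<noteq> w \<and> v \<noteq> z\<close> by auto
      ultimately have "{u,v} = {x,y}" by simp
      then show ?thesis unfolding samep_def doubleton_eq_iff by blast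
    qed (use 3 s2 in \<open>auto simp: samep_def\<close>)
  qed (use s2 in \<open>auto simp: samep_def\<close>)
qed

lemma samep_inj: "inj \<sigma> \<Longrightarrow> samep u v w z \<Longrightarrow> samep (\<sigma> u) (\<sigma> v) (\<sigma> w) (\<sigma> z)"
  unfolding samep_def inj_def by metis

definition pidx :: "(nat \<Rightarrow> nat) \<Rightarrow> nat \<Rightarrow> nat" where
  "pidx \<sigma> k = pi4 (\<sigma> 0) (\<sigma> k)"

lemma p4_in: "\<sigma> permutes {..<4::nat} \<Longrightarrow> x < 4 \<Longrightarrow> \<sigma> x < 4"
  using permutes_in_image by fastforce
lemma p4_inj: "\<sigma> permutes {..<4::nat} \<Longrightarrow> \<sigma> x = \<sigma> y \<longleftrightarrow> x = y"
  using permutes_inj by (metis injD)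

lemma pidx_range: "\<sigma> permutes {..<4} \<Longrightarrow> k \<in> {1,2,3} \<Longrightarrow> pidx \<sigma> k \<in> {1,2,3}"
  unfolding pidx_def using pi4_prop[of "\<sigma> 0" "\<sigma> k"] p4_in[of \<sigma>] p4_inj[of \<sigma>] by auto

lemma pidx_comp:
  assumes s: "\<sigma> permutes {..<4}" and t: "\<tau> permutes {..<4}" and k: "k \<in> {1,2,3}"
  shows "pidx (\<sigma> \<circ> \<tau>) k = pidx \<sigma> (pidx \<tau> k)"
proof -
  define x y where "x = \<tau> 0" and "y = \<tau> k"
  have xy: "x < 4" "y < 4" "x \<noteq> y" using p4_in[OF t] p4_inj[OF t] k unfolding x_def y_def by auto
  define j where "j = pi4 x y"
  have j: "j \<in> {1,2,3}" "samep x y 0 j" using pi4_prop[OF xy] j_def by auto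
  have s1: "samep (\<sigma> x) (\<sigma> y) (\<sigma> 0) (\<sigma> j)" using samep_inj[OF permutes_inj[OF s] j(2)] .
  define l where "l = pi4 (\<sigma> 0) (\<sigma> j)"
  have sj: "\<sigma> 0 < 4" "\<sigma> j < 4" "\<sigma> 0 \<noteq> \<sigma> j" using p4_in[OF s] p4_inj[OF s] j(1) by auto
  have l: "l \<in> {1,2,3}" "samep (\<sigma> 0) (\<sigma> j) 0 l" using pi4_prop[OF sj] l_def by auto
  have sxy: "\<sigma> x < 4" "\<sigma> y < 4" "\<sigma> x \<noteq> \<sigma> y" using p4_in[OF s] p4_inj[OF s] xy by auto
  have "samep (\<sigma> x) (\<sigma> y) 0 l"
    using samep_trans[OF sxy(1,2) sj(1,2) _ _ sxy(3) sj(3) _ s1 l(2)] l(1) by auto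
  then have "l = pi4 (\<sigma> x) (\<sigma> y)" using pi4_uniq[OF sxy l(1)] by simp
  then show ?thesis unfolding pidx_def l_def j_def x_def y_def by simp
qed

definition nxt :: "nat \<Rightarrow> nat" where "nxt k = (if k = 3 then 1 else Suc k)"

definition Rot :: "(nat \<Rightarrow> nat) \<Rightarrow> bool" where
  "Rot \<sigma> \<longleftrightarrow> (\<forall>k\<in>{1,2,3}. pidx \<sigma> (nxt k) = nxt (pidx \<sigma> k))"

definition prv :: "nat \<Rightarrow> nat" where "prv k = (if k = 1 then 3 else k - 1)"

definition Anti :: "(nat \<Rightarrow> nat) \<Rightarrow> bool" where
  "Anti \<sigma> \<longleftrightarrow> (\<forall>k\<in>{1,2,3}. pidx \<sigma> (nxt k) = prv (pidx \<sigma> k) \<and> pidx \<sigma> (prv k) = nxt (pidx \<sigma> k))"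

lemma Anti_swap:
  assumes "a < 4" "b < 4" "a \<noteq> b"
  shows "Anti (transpose a b)"
  using assms unfolding lt4
  by (elim disjE; simp add: Anti_def pidx_def pi4_def nxt_def prv_def transpose_def)

lemma Rot_3cyc:
  assumes "a < 4" "b < 4" "c < 4" "a \<noteq> b" "b \<noteq> c" "a \<noteq> c"
  shows "Rot (transpose a b \<circ> transpose b c)"
  unfolding Rot_def
proof
  fix k :: nat assume k: "k \<in> {1,2,3}"
  have p1: "transpose a b permutes {..<4}" and p2: "transpose b c permutes {..<4}"
    using assms by (auto intro: permutes_swap_id)
  have A1: "Anti (transpose a b)" and A2: "Anti (transpose b c)" using Anti_swap assms by auto
  have nx: "nxt k \<in> {1,2,3}" using k by (auto simp: nxt_def)
  have r: "pidx (transpose b c) k \<in> {1,2,3}" using pidx_range[OF p2 k] .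
  have "pidx (transpose a b \<circ> transpose b c) (nxt k) = pidx (transpose a b) (pidx (transpose b c) (nxt k))"
    using pidx_comp[OF p1 p2 nx] .
  also have "\<dots> = pidx (transpose a b) (prv (pidx (transpose b c) k))" using A2 k unfolding Anti_def by auto
  also have "\<dots> = nxt (pidx (transpose a b) (pidx (transpose b c) k))" using A1 r unfolding Anti_def by auto
  also have "\<dots> = nxt (pidx (transpose a b \<circ> transpose b c) k)" using pidx_comp[OF p1 p2 k] by simp
  finally show "pidx (transpose a b \<circ> transpose b c) (nxt k) = nxt (pidx (transpose a b \<circ> transpose b c) k)" .
qed

lemma Rot_alt4:
  assumes s: "\<sigma> \<in> Alt 4" shows "Rot \<sigma>"
proof -
  have "\<sigma> permutes {..<4} \<and> Rot \<sigma>"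
  proof (rule alt_induct[OF alt_permutes[OF s] _ alt_even[OF s], where P="\<lambda>\<tau>. \<tau> permutes {..<4} \<and> Rot \<tau>"])
    show "id permutes {..<4} \<and> Rot id" by (auto simp: Rot_def pidx_def pi4_def nxt_def permutes_id)
  next
    fix \<tau> and a b c :: nat assume h: "\<tau> permutes {..<4} \<and> Rot \<tau>" "a \<noteq> b" "b \<noteq> c" "a \<noteq> c" "a \<in> {..<4}" "b \<in> {..<4}" "c \<in> {..<4}"
    let ?t = "transpose a b \<circ> transpose b c"
    have tp: "?t permutes {..<4}" using alt_permutes[OF alt_3cyc[of a 4 b c]] h by auto
    have Rt: "Rot ?t" using Rot_3cyc h by auto
    have nx: "nxt k \<in> {1,2,3}" if "k \<in> {1,2,3}" for k using that by (auto simp: nxt_def)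
    have "Rot (\<tau> \<circ> ?t)" unfolding Rot_def
    proof
      fix k :: nat assume k: "k \<in> {1,2,3}"
      have "pidx (\<tau> \<circ> ?t) (nxt k) = pidx \<tau> (pidx ?t (nxt k))" using pidx_comp[OF _ tp nx[OF k]] h by auto
      also have "\<dots> = pidx \<tau> (nxt (pidx ?t k))" using Rt k unfolding Rot_def by auto
      also have "\<dots> = nxt (pidx \<tau> (pidx ?t k))" using h(1) pidx_range[OF tp k] unfolding Rot_def by auto
      also have "\<dots> = nxt (pidx (\<tau> \<circ> ?t) k)" using pidx_comp[OF _ tp k] h by auto
      finally show "pidx (\<tau> \<circ> ?t) (nxt k) = nxt (pidx (\<tau> \<circ> ?t) k)" .
    qed
    then show "\<tau> \<circ> ?t permutes {..<4} \<and> Rot (\<tau> \<circ> ?t)" using permutes_compose[OF tp] h by auto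
  qed auto
  then show ?thesis by simp
qed

definition rr :: "(nat \<Rightarrow> nat) \<Rightarrow> nat" where "rr \<sigma> = pidx \<sigma> 1 - 1"

lemma rr_comp:
  assumes s: "\<sigma> \<in> Alt 4" and t: "\<tau> \<in> Alt 4"
  shows "rr (\<sigma> \<circ> \<tau>) = (rr \<sigma> + rr \<tau>) mod 3"
proof -
  have sp: "\<sigma> permutes {..<4}" and tp: "\<tau> permutes {..<4}" using s t alt_permutes by auto
  have c: "pidx (\<sigma> \<circ> \<tau>) 1 = pidx \<sigma> (pidx \<tau> 1)" using pidx_comp[OF sp tp] by simp
  have R0: "pidx \<sigma> (nxt k) = nxt (pidx \<sigma> k)" if "k \<in> {1,2,3}" for k
    using Rot_alt4[OF s] that unfolding Rot_def by auto
  have n12: "nxt 1 = 2" "nxt 2 = 3" by (simp_all add: nxt_def)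
  have "pidx \<sigma> (nxt 1) = nxt (pidx \<sigma> 1)" "pidx \<sigma> (nxt 2) = nxt (pidx \<sigma> 2)" using R0 by simp_all
  then have R: "pidx \<sigma> 2 = nxt (pidx \<sigma> 1)" "pidx \<sigma> 3 = nxt (pidx \<sigma> 2)" unfolding n12 .
  have r1: "pidx \<sigma> 1 \<in> {1,2,3}" "pidx \<tau> 1 \<in> {1,2,3}" using pidx_range sp tp by auto
  show ?thesis unfolding rr_def c
  proof -
    consider "pidx \<tau> 1 = 1" | "pidx \<tau> 1 = 2" | "pidx \<tau> 1 = 3" using r1 by auto
    then show "pidx \<sigma> (pidx \<tau> 1) - 1 = (pidx \<sigma> 1 - 1 + (pidx \<tau> 1 - 1)) mod 3"
      by cases (use r1 R in \<open>auto simp: nxt_def\<close>)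
  qed
qed

lemma rr_lt: assumes "\<sigma> \<in> Alt 4" shows "rr \<sigma> < 3"
  using pidx_range[OF alt_permutes[OF assms], of 1] by (auto simp: rr_def)

lemma rr_id: "rr id = 0" by (simp add: rr_def pidx_def pi4_def)

lemma rr_c: "rr (transpose 0 1 \<circ> transpose 1 2) = 2" by (simp add: rr_def pidx_def pi4_def)

definition om :: complex where "om = Complex (-1/2) (sqrt 3 / 2)"

lemma om2: "om ^ 2 = Complex (-1/2) (- sqrt 3 / 2)"
  by (simp add: om_def power2_eq_square complex_eq_iff real_sqrt_mult_self)
lemma om3: "om ^ 3 = 1"
proof -
  have "om ^ 3 = om ^ 2 * om" by (simp add: power3_eq_cube power2_eq_square)
  also have "\<dots> = 1" unfolding om2 by (simp add: om_def complex_eq_iff real_sqrt_mult_self)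
  finally show ?thesis .
qed
lemma om_ne: "om \<noteq> 1" "om ^ 2 \<noteq> 1" "om ^ 2 \<noteq> om" "om \<noteq> 0"
  unfolding om2 by (simp_all add: om_def complex_eq_iff)

lemma om_pow_mod: "om ^ n = om ^ (n mod 3)"
proof -
  have "om ^ n = om ^ (3 * (n div 3) + n mod 3)" by simp
  also have "\<dots> = (om ^ 3) ^ (n div 3) * om ^ (n mod 3)" by (simp only: power_add power_mult)
  finally show ?thesis using om3 by simp
qed

lemma cube_roots:
  fixes z :: complex assumes "z ^ 3 = 1" shows "z = 1 \<or> z = om \<or> z = om ^ 2"
proof -
  have s: "om + om ^ 2 = -1" unfolding om2 by (simp add: om_def complex_eq_iff)
  have "(z - 1) * (z - om) * (z - om ^ 2) = z ^ 3 - (1 + om + om^2) * z^2 + (om + om^2 + om^3) * z - om ^ 3"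
    by (simp add: algebra_simps power2_eq_square power3_eq_cube)
  also have "\<dots> = z ^ 3 - 1"
  proof -
    have "1 + om + om ^ 2 = 1 + (om + om ^ 2)" by (simp only: add.assoc)
    then have s1: "1 + om + om ^ 2 = 0" using s by simp
    have s2: "om + om ^ 2 + om ^ 3 = 0" using s om3 by simp
    show ?thesis unfolding s1 s2 om3 using s by simp
  qed
  finally have "(z - 1) * (z - om) * (z - om ^ 2) = 0" using assms by simp
  then show ?thesis by auto
qed

definition chi :: "(nat \<Rightarrow> nat) \<Rightarrow> complex" where "chi \<sigma> = om ^ rr \<sigma>"

lemma chi_mult: "\<sigma> \<in> Alt 4 \<Longrightarrow> \<tau> \<in> Alt 4 \<Longrightarrow> chi (\<sigma> \<circ> \<tau>) = chi \<sigma> * chi \<tau>"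
proof -
  assume s: "\<sigma> \<in> Alt 4" and t: "\<tau> \<in> Alt 4"
  have "chi (\<sigma> \<circ> \<tau>) = om ^ ((rr \<sigma> + rr \<tau>) mod 3)" unfolding chi_def rr_comp[OF s t] ..
  also have "\<dots> = om ^ (rr \<sigma> + rr \<tau>)" using om_pow_mod[of "rr \<sigma> + rr \<tau>"] by simp
  finally show ?thesis by (simp add: chi_def power_add)
qed

lemma chi_id: "chi id = 1" by (simp add: chi_def rr_id)
lemma chi_c: "chi (transpose 0 1 \<circ> transpose 1 2) = om ^ 2" by (simp only: chi_def rr_c)
lemma chi_cube: "chi \<sigma> ^ 3 = 1"
proof -
  have "chi \<sigma> ^ 3 = (om ^ 3) ^ rr \<sigma>" unfolding chi_def by (simp add: power_mult[symmetric] mult.commute)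
  then show ?thesis using om3 by simp
qed
lemma chi_nz: "chi \<sigma> \<noteq> 0" using om_ne by (simp add: chi_def)



definition gr :: "nat \<Rightarrow> nat \<Rightarrow> nat" where
  "gr i = (if i = 4 then id else SOME g. g \<in> Alt 5 \<and> g 4 = i)"

lemma gr: assumes "i < 5" shows "gr i \<in> Alt 5" "gr i 4 = i"
proof -
  have "gr i \<in> Alt 5 \<and> gr i 4 = i"
  proof (cases "i = 4")
    case True then show ?thesis by (simp add: gr_def alt_id)
  next
    case False
    have "\<exists>g. g \<in> Alt (Suc 4) \<and> g 4 = i" using reps[of 4 i] assms by auto
    then show ?thesis using someI_ex[of "\<lambda>g. g \<in> Alt 5 \<and> g 4 = i"] False by (simp add: gr_def)
  qed
  then show "gr i \<in> Alt 5" "gr i 4 = i" by auto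
qed

lemma gr4: "gr 4 = id" by (simp add: gr_def)

definition hh :: "(nat \<Rightarrow> nat) \<Rightarrow> nat \<Rightarrow> (nat \<Rightarrow> nat)" where
  "hh \<sigma> i = hinv (gr i) \<circ> \<sigma> \<circ> gr (hinv \<sigma> i)"

lemma hh_alt4:
  assumes s: "\<sigma> \<in> Alt 5" and i: "i < 5"
  shows "hh \<sigma> i \<in> Alt 4"
proof -
  define j where "j = hinv \<sigma> i"
  have j: "j < 5" using alt_inv_in[OF s i] j_def by simp
  have "hh \<sigma> i \<in> Alt 5" unfolding hh_def j_def[symmetric]
    using alt_comp[OF alt_comp[OF alt_inv[OF gr(1)[OF i]] s] gr(1)[OF j]] .
  then have hA: "hh \<sigma> i \<in> Alt (Suc 4)" by simp
  have gi_inv: "hinv (gr i) i = 4" using alt_inv_apply(2)[OF gr(1)[OF i], of 4] gr(2)[OF i] by simp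
  have "hh \<sigma> i 4 = 4" unfolding hh_def j_def[symmetric] using gr(2)[OF j] alt_inv_apply(1)[OF s] j_def gi_inv by simp
  then show ?thesis using alt_fix hA by blast
qed

definition FF :: "(nat \<Rightarrow> nat) \<Rightarrow> nat \<Rightarrow> complex" where
  "FF \<sigma> i = (if \<sigma> \<in> Alt 5 \<and> i < 5 then chi (hh \<sigma> i) else 1)"

lemma FF_cocyc:
  assumes s: "\<sigma> \<in> Alt 5" and t: "\<tau> \<in> Alt 5"
  shows "FF (\<sigma> \<circ> \<tau>) i = FF \<sigma> i * FF \<tau> (hinv \<sigma> i)"
proof (cases "i < 5")
  case False
  then show ?thesis using alt_inv_out[OF s False] by (simp add: FF_def)
next
  case True
  define j where "j = hinv \<sigma> i"
  have j: "j < 5" using alt_inv_in[OF s True] j_def by simp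
  have st: "\<sigma> \<circ> \<tau> \<in> Alt 5" using alt_comp s t by blast
  have inv: "hinv (\<sigma> \<circ> \<tau>) i = hinv \<tau> j" using alt_inv_comp[OF s t] j_def by simp
  have "hh \<sigma> i \<circ> hh \<tau> j = hinv (gr i) \<circ> \<sigma> \<circ> (gr j \<circ> hinv (gr j)) \<circ> \<tau> \<circ> gr (hinv \<tau> j)"
    unfolding hh_def j_def by (simp add: o_assoc)
  also have "\<dots> = hh (\<sigma> \<circ> \<tau>) i"
    unfolding hh_def inv using permutes_inv_o(1)[OF alt_permutes[OF gr(1)[OF j]]] by (simp add: o_assoc)
  finally have e: "hh (\<sigma> \<circ> \<tau>) i = hh \<sigma> i \<circ> hh \<tau> j" ..
  show ?thesis
    unfolding FF_def j_def[symmetric] using st s t True j e chi_mult[OF hh_alt4[OF s True] hh_alt4[OF t j]] by simp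
qed

lemma FF_cube: "FF \<sigma> i ^ 3 = 1"
  by (simp add: FF_def chi_cube)

lemma FF_nz: "FF \<sigma> i \<noteq> 0"
  by (simp add: FF_def chi_nz)

lemma FF_id: "FF id i = 1"
proof (cases "i < 5")
  case True
  have "hh id i = id" unfolding hh_def using permutes_inv_o(2)[OF alt_permutes[OF gr(1)[OF True]]] by simp
  then show ?thesis using True alt_id by (simp add: FF_def chi_id)
qed (simp add: FF_def)

lemma FF_prod:
  assumes s: "\<sigma> \<in> Alt 5" shows "(\<Prod>i<5. FF \<sigma> i) = 1"
proof -
  let ?\<psi> = "\<lambda>\<sigma>. \<Prod>i<5. FF \<sigma> i"
  have mo: "mulon 5 ?\<psi>" unfolding mulon_def
  proof (intro conjI ballI)
    show "?\<psi> id = 1" by (simp add: FF_id)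
    fix \<sigma> \<tau> assume s: "\<sigma> \<in> Alt 5" and t: "\<tau> \<in> Alt 5"
    have "?\<psi> (\<sigma> \<circ> \<tau>) = (\<Prod>i<5. FF \<sigma> i * FF \<tau> (hinv \<sigma> i))" using FF_cocyc[OF s t] by simp
    also have "\<dots> = ?\<psi> \<sigma> * (\<Prod>i<5. FF \<tau> (hinv \<sigma> i))" by (simp add: prod.distrib)
    also have "(\<Prod>i<5. FF \<tau> (hinv \<sigma> i)) = ?\<psi> \<tau>"
      using prod.permute[OF permutes_inv[OF alt_permutes[OF s]], of "FF \<tau>"] by (simp add: o_def)
    finally show "?\<psi> (\<sigma> \<circ> \<tau>) = ?\<psi> \<sigma> * ?\<psi> \<tau>" .
  qed
  show ?thesis
    by (rule triv_from_3cycles[OF mo _ s]) (rule psi_3cycle_ge5[OF mo], auto)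
qed

lemma FF_Z1: "FF \<in> Z1 (Xq 5 3) 5"
proof -
  have X: "FF \<sigma> \<in> Xq 5 3" if s: "\<sigma> \<in> Alt 5" for \<sigma>
  proof -
    have "FF \<sigma> \<in> Dq 5 3" unfolding Dq_def
    proof (intro CollectI conjI allI impI)
      show "FF \<sigma> i = 1" if "5 \<le> i" for i using that by (simp add: FF_def)
      show "FF \<sigma> i \<noteq> 0" for i using FF_nz .
      show "\<exists>k. \<forall>i<5. FF \<sigma> i ^ 3 ^ k = 1" using FF_cube by (intro exI[of _ 1]) simp
    qed
    then show ?thesis using FF_prod[OF s] by (simp add: Xq_def)
  qed
  show ?thesis unfolding Z1_def
  proof (intro CollectI conjI ballI allI impI)
    fix \<sigma> assume "\<sigma> \<in> Alt 5" then show "FF \<sigma> \<in> Xq 5 3" using X by blast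
  next
    fix \<sigma> :: "nat \<Rightarrow> nat" assume "\<sigma> \<notin> Alt 5" then show "FF \<sigma> = (\<lambda>i. 1)" by (intro ext) (simp add: FF_def)
  next
    fix \<sigma> \<tau> assume s: "\<sigma> \<in> Alt 5" and t: "\<tau> \<in> Alt 5"
    show "FF (\<sigma> \<circ> \<tau>) = (\<lambda>i. FF \<sigma> i * act \<sigma> (FF \<tau>) i)"
      by (rule ext) (simp only: act_def FF_cocyc[OF s t])
  qed
qed

definition cc :: "nat \<Rightarrow> nat" where "cc = transpose 0 1 \<circ> transpose 1 2"

lemma cc_alt: "cc \<in> Alt 4" "cc \<in> Alt 5"
  unfolding cc_def by (auto intro: alt_3cyc)

lemma cc_inv4: "hinv cc 4 = 4"
  using alt_inv_out[OF cc_alt(1)] by simp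

lemma FF_c: "FF cc 4 = om ^ 2"
proof -
  have "hh cc 4 = cc" unfolding hh_def cc_inv4 gr4 by simp
  then show ?thesis using cc_alt(2) chi_c by (simp add: FF_def cc_def)
qed



lemma Xq_mult:
  assumes d: "d \<in> Xq p q" and e: "e \<in> Xq p q"
  shows "(\<lambda>i. d i * e i) \<in> Xq p q"
proof -
  obtain k1 where k1: "\<forall>i<p. d i ^ (q ^ k1) = 1" using d Dq_pow Xq_Dq by blast
  obtain k2 where k2: "\<forall>i<p. e i ^ (q ^ k2) = 1" using e Dq_pow Xq_Dq by blast
  have "(d i * e i) ^ (q ^ (k1 + k2)) = 1" if "i < p" for i
  proof -
    have "d i ^ (q ^ (k1 + k2)) = (d i ^ (q ^ k1)) ^ (q ^ k2)" by (simp add: power_add power_mult)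
    moreover have "e i ^ (q ^ (k1 + k2)) = (e i ^ (q ^ k2)) ^ (q ^ k1)"
      by (simp only: power_add mult.commute[of "q ^ k1"] power_mult)
    ultimately show ?thesis using k1 k2 that by (simp add: power_mult_distrib)
  qed
  moreover have "(\<Prod>i<p. d i * e i) = 1" using d e by (simp add: Xq_def prod.distrib)
  ultimately show ?thesis using d e unfolding Xq_def Dq_def by auto
qed

lemma Xq_inv:
  assumes d: "d \<in> Xq p q"
  shows "(\<lambda>i. 1 / d i) \<in> Xq p q"
proof -
  obtain k1 where k1: "\<forall>i<p. d i ^ (q ^ k1) = 1" using d Dq_pow Xq_Dq by blast
  have "(\<Prod>i<p. 1 / d i) = 1" using d by (simp add: Xq_def prod_dividef)
  then show ?thesis using d k1 unfolding Xq_def Dq_def by (auto simp: power_one_over)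
qed

lemma Xq_one: "(\<lambda>i. 1) \<in> Xq p q"
  unfolding Xq_def Dq_def by auto

lemma Z1_mult:
  assumes f: "f \<in> Z1 (Xq p q) p" and g: "g \<in> Z1 (Xq p q) p"
  shows "(\<lambda>\<sigma> i. f \<sigma> i * g \<sigma> i) \<in> Z1 (Xq p q) p"
  unfolding Z1_def
proof (intro CollectI conjI ballI allI impI)
  fix \<sigma> assume "\<sigma> \<in> Alt p" then show "(\<lambda>i. f \<sigma> i * g \<sigma> i) \<in> Xq p q"
    using Xq_mult z1_in f g by blast
next
  fix \<sigma> :: "nat \<Rightarrow> nat" assume "\<sigma> \<notin> Alt p" then show "(\<lambda>i. f \<sigma> i * g \<sigma> i) = (\<lambda>i. 1)"
    using z1_out f g by simp
next
  fix \<sigma> \<tau> assume s: "\<sigma> \<in> Alt p" and t: "\<tau> \<in> Alt p"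
  show "(\<lambda>i. f (\<sigma> \<circ> \<tau>) i * g (\<sigma> \<circ> \<tau>) i) = (\<lambda>i. f \<sigma> i * g \<sigma> i * act \<sigma> (\<lambda>i. f \<tau> i * g \<tau> i) i)"
    by (rule ext) (simp add: z1_cocyc[OF f s t] z1_cocyc[OF g s t] act_def algebra_simps)
qed

lemma Z1_inv:
  assumes f: "f \<in> Z1 (Xq p q) p"
  shows "(\<lambda>\<sigma> i. 1 / f \<sigma> i) \<in> Z1 (Xq p q) p"
  unfolding Z1_def
proof (intro CollectI conjI ballI allI impI)
  fix \<sigma> assume "\<sigma> \<in> Alt p" then show "(\<lambda>i. 1 / f \<sigma> i) \<in> Xq p q"
    using Xq_inv z1_in f by blast
next
  fix \<sigma> :: "nat \<Rightarrow> nat" assume "\<sigma> \<notin> Alt p" then show "(\<lambda>i. 1 / f \<sigma> i) = (\<lambda>i. 1)"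
    using z1_out f by simp
next
  fix \<sigma> \<tau> assume s: "\<sigma> \<in> Alt p" and t: "\<tau> \<in> Alt p"
  show "(\<lambda>i. 1 / f (\<sigma> \<circ> \<tau>) i) = (\<lambda>i. 1 / f \<sigma> i * act \<sigma> (\<lambda>i. 1 / f \<tau> i) i)"
    by (rule ext) (simp add: z1_cocyc[OF f s t] act_def)
qed

lemma Z1_one: "(\<lambda>\<sigma> i. 1) \<in> Z1 (Xq p q) p"
  unfolding Z1_def act_def using Xq_one by auto

abbreviation GG where "GG \<equiv> Z1_group (Xq 5 3) 5"

lemma GG_carrier: "carrier GG = Z1 (Xq 5 3) 5" by (simp add: Z1_group_def)
lemma GG_mult: "x \<otimes>\<^bsub>GG\<^esub> y = (\<lambda>\<sigma> i. x \<sigma> i * y \<sigma> i)" by (simp add: Z1_group_def)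
lemma GG_one: "\<one>\<^bsub>GG\<^esub> = (\<lambda>\<sigma> i. 1)" by (simp add: Z1_group_def)

lemma GG_group: "group GG"
proof (rule groupI)
  fix x y assume "x \<in> carrier GG" "y \<in> carrier GG"
  then show "x \<otimes>\<^bsub>GG\<^esub> y \<in> carrier GG" unfolding GG_carrier GG_mult by (rule Z1_mult)
next
  show "\<one>\<^bsub>GG\<^esub> \<in> carrier GG" unfolding GG_carrier GG_one by (rule Z1_one)
next
  fix x y z
  show "x \<otimes>\<^bsub>GG\<^esub> y \<otimes>\<^bsub>GG\<^esub> z = x \<otimes>\<^bsub>GG\<^esub> (y \<otimes>\<^bsub>GG\<^esub> z)" unfolding GG_mult by (simp add: mult.assoc)
next
  fix x show "\<one>\<^bsub>GG\<^esub> \<otimes>\<^bsub>GG\<^esub> x = x" unfolding GG_mult GG_one by simp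
next
  fix x assume x: "x \<in> carrier GG"
  have nz: "x \<sigma> i \<noteq> 0" for \<sigma> i
  proof (cases "\<sigma> \<in> Alt 5")
    case True then show ?thesis using z1_in[OF x[unfolded GG_carrier] True] Xq_Dq Dq_nz' by blast
  next
    case False then show ?thesis using z1_out[OF x[unfolded GG_carrier] False] by simp
  qed
  have "(\<lambda>\<sigma> i. 1 / x \<sigma> i) \<in> carrier GG" using Z1_inv x unfolding GG_carrier by blast
  moreover have "(\<lambda>\<sigma> i. 1 / x \<sigma> i) \<otimes>\<^bsub>GG\<^esub> x = \<one>\<^bsub>GG\<^esub>" unfolding GG_mult GG_one using nz by simp
  ultimately show "\<exists>y\<in>carrier GG. y \<otimes>\<^bsub>GG\<^esub> x = \<one>\<^bsub>GG\<^esub>" by blast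
qed

definition code :: "complex \<Rightarrow> int" where
  "code z = (if z = 1 then 0 else if z = om then 1 else 2)"

lemma om_facts: "om * om = om ^ 2" "om * om ^ 2 = 1" "om ^ 2 * om = 1" "om ^ 2 * om ^ 2 = om"
proof -
  show "om * om = om ^ 2" by (simp add: power2_eq_square)
  show a: "om * om ^ 2 = 1" using om3 by (simp add: power2_eq_square power3_eq_cube mult.assoc)
  then show "om ^ 2 * om = 1" by (simp add: mult.commute)
  have "om ^ 2 * om ^ 2 = (om * om ^ 2) * om" by (simp add: power2_eq_square)
  then show "om ^ 2 * om ^ 2 = om" using a by simp
qed

lemma code_mult:
  assumes "z \<in> {1, om, om ^ 2}" "w \<in> {1, om, om ^ 2}"
  shows "code (z * w) = (code z + code w) mod 3"
  using assms om_ne om_facts by (auto simp: code_def)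

lemma code_range: "code z \<in> {0..<3}" by (simp add: code_def)

lemma Z1X_D: "f \<in> Z1 (Xq 5 3) 5 \<Longrightarrow> f \<in> Z1 (Dq 5 3) 5"
  unfolding Z1_def using Xq_Dq by blast

lemma cc_val:
  assumes f: "f \<in> Z1 (Xq 5 3) 5"
  shows "f cc 4 \<in> {1, om, om ^ 2}"
proof -
  have f': "f \<in> Z1 (Xq (Suc 4) 3) (Suc 4)" using f by simp
  have mo: "mulon 4 (\<lambda>h. f h 4)" using psi_mulon[OF f'] Xq_Dq by auto
  have "f cc 4 ^ 3 = 1" using psi_cube[OF mo, of 0 1 2] by (simp add: cc_def)
  then show ?thesis using cube_roots by auto
qed

definition Phi :: "((nat \<Rightarrow> nat) \<Rightarrow> nat \<Rightarrow> complex) \<Rightarrow> int" where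
  "Phi f = code (f cc 4)"

lemma Phi_hom: "Phi \<in> hom GG (integer_mod_group 3)"
  unfolding hom_def
proof (intro CollectI conjI ballI funcsetI)
  fix x assume "x \<in> carrier GG" then show "Phi x \<in> carrier (integer_mod_group 3)"
    using code_range by (simp add: Phi_def carrier_integer_mod_group)
next
  fix x y assume x: "x \<in> carrier GG" and y: "y \<in> carrier GG"
  show "Phi (x \<otimes>\<^bsub>GG\<^esub> y) = Phi x \<otimes>\<^bsub>integer_mod_group 3\<^esub> Phi y"
    unfolding GG_mult Phi_def using code_mult cc_val x y GG_carrier by simp
qed



lemma conj_transpose:
  assumes "inj g" shows "g \<circ> transpose x y = transpose (g x) (g y) \<circ> g"
  by (rule ext) (simp add: transpose_def inj_eq[OF assms])

lemma conj_help:
  assumes mo: "mulon 4 \<psi>" and g: "g \<in> Alt 4" and s: "s \<in> Alt 4" and t: "t \<in> Alt 4"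
    and ps: "\<psi> s = 1" and e: "g \<circ> s = t \<circ> g"
  shows "\<psi> t = 1"
proof -
  have M: "\<And>x y. x \<in> Alt 4 \<Longrightarrow> y \<in> Alt 4 \<Longrightarrow> \<psi> (x \<circ> y) = \<psi> x * \<psi> y" and I: "\<psi> id = 1"
    using mo unfolding mulon_def by auto
  have "\<psi> g * \<psi> (hinv g) = 1" using M[OF g alt_inv[OF g]] permutes_inv_o(1)[OF alt_permutes[OF g]] I by simp
  then have nz: "\<psi> g \<noteq> 0" by auto
  have "\<psi> g = \<psi> t * \<psi> g" using M[OF g s] M[OF t g] e ps by simp
  then show ?thesis using nz by simp
qed

lemma conj4:
  assumes mo: "mulon 4 \<psi>" and pc: "\<psi> cc = 1"
    and abc: "a < 4" "b < 4" "e < 4" "a \<noteq> b" "b \<noteq> e" "a \<noteq> e"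
  shows "\<psi> (transpose a b \<circ> transpose b e) = 1"
proof -
  have M: "\<And>x y. x \<in> Alt 4 \<Longrightarrow> y \<in> Alt 4 \<Longrightarrow> \<psi> (x \<circ> y) = \<psi> x * \<psi> y"
    using mo unfolding mulon_def by auto
  have c3: "card {a,b,e} \<le> 3" by (simp add: card_insert_if)
  have "\<not> {..<4::nat} \<subseteq> {a,b,e}"
  proof
    assume "{..<4::nat} \<subseteq> {a,b,e}"
    then have "card {..<4::nat} \<le> card {a,b,e}" by (rule card_mono[rotated]) simp
    then show False using c3 by simp
  qed
  then obtain d where d: "d < 4" "d \<noteq> a" "d \<noteq> b" "d \<noteq> e" by auto
  define g where "g = (\<lambda>x::nat. if x = 0 then a else if x = 1 then b else if x = 2 then e else if x = 3 then d else x)"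
  have "x = y" if "x < 4" "y < 4" "g x = g y" for x y
  proof -
    have xs: "x = 0 \<or> x = 1 \<or> x = 2 \<or> x = 3" and ys: "y = 0 \<or> y = 1 \<or> y = 2 \<or> y = 3" using that(1,2) by auto
    show ?thesis using xs ys that(3) abc d by (elim disjE) (simp_all add: g_def)
  qed
  then have ginj: "inj_on g {..<4}" unfolding inj_on_def by auto
  have "g x < 4" if "x < 4" for x using that abc d by (simp add: g_def)
  then have gim: "g ` {..<4} \<subseteq> {..<4}" by auto
  have gp: "g permutes {..<4}"
  proof (rule bij_imp_permutes)
    show "bij_betw g {..<4} {..<4}" unfolding bij_betw_def using ginj endo_inj_surj[OF _ gim ginj] by simp
    show "g x = x" if "x \<notin> {..<4}" for x using that by (simp add: g_def)
  qed
  have ginj': "inj g" using permutes_inj[OF gp] .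
  let ?t = "transpose a b \<circ> transpose b e"
  have t: "?t \<in> Alt 4" using alt_3cyc abc by auto
  have gv: "g 0 = a" "g 1 = b" "g 2 = e" by (simp_all add: g_def)
  show ?thesis
  proof (cases "evenperm g")
    case True
    then have gA: "g \<in> Alt 4" using gp by (simp add: Alt_def)
    have c1: "g \<circ> transpose 0 1 = transpose a b \<circ> g" using conj_transpose[OF ginj', of 0 1] unfolding gv .
    have c2: "g \<circ> transpose 1 2 = transpose b e \<circ> g" using conj_transpose[OF ginj', of 1 2] unfolding gv .
    have "g \<circ> cc = (g \<circ> transpose 0 1) \<circ> transpose 1 2" by (simp only: cc_def o_assoc)
    also have "\<dots> = transpose a b \<circ> (g \<circ> transpose 1 2)" by (simp only: c1 o_assoc)
    also have "\<dots> = ?t \<circ> g" by (simp only: c2 o_assoc)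
    finally have "g \<circ> cc = ?t \<circ> g" .
    then show ?thesis by (rule conj_help[OF mo gA cc_alt(1) t pc])
  next
    case False
    define g' where "g' = g \<circ> transpose 0 1"
    have g'p: "g' permutes {..<4}" unfolding g'_def by (intro permutes_compose[OF _ gp] permutes_swap_id) auto
    have "evenperm g'" unfolding g'_def using False
      by (simp add: evenperm_comp permutes_imp_permutation[OF _ gp] permutation_swap_id evenperm_swap)
    then have gA: "g' \<in> Alt 4" using g'p by (simp add: Alt_def)
    have ginj2: "inj g'" using permutes_inj[OF g'p] .
    have gv': "g' 1 = a" "g' 0 = b" "g' 2 = e" by (simp_all add: g'_def g_def)
    define c2 where "c2 = transpose (1::nat) 0 \<circ> transpose 0 2"
    have c2: "c2 = cc \<circ> cc"
    proof
      fix x show "c2 x = (cc \<circ> cc) x"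
        unfolding c2_def cc_def by (cases "x = 0"; cases "x = 1"; cases "x = 2") (simp_all add: transpose_def)
    qed
    have c2A: "c2 \<in> Alt 4" unfolding c2 using alt_comp cc_alt(1) by blast
    have pc2: "\<psi> c2 = 1" unfolding c2 using M[OF cc_alt(1) cc_alt(1)] pc by simp
    have d1: "g' \<circ> transpose 1 0 = transpose a b \<circ> g'" using conj_transpose[OF ginj2, of 1 0] unfolding gv' .
    have d2: "g' \<circ> transpose 0 2 = transpose b e \<circ> g'" using conj_transpose[OF ginj2, of 0 2] unfolding gv' .
    have "g' \<circ> c2 = (g' \<circ> transpose 1 0) \<circ> transpose 0 2" by (simp only: c2_def o_assoc)
    also have "\<dots> = transpose a b \<circ> (g' \<circ> transpose 0 2)" by (simp only: d1 o_assoc)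
    also have "\<dots> = ?t \<circ> g'" by (simp only: d2 o_assoc)
    finally have "g' \<circ> c2 = ?t \<circ> g'" .
    then show ?thesis by (rule conj_help[OF mo gA c2A t pc2])
  qed
qed

lemma adjust:
  assumes m: "m \<in> Dq 5 3"
  shows "\<exists>m'\<in>Xq 5 3. \<forall>\<sigma>\<in>Alt 5. (\<lambda>i. act \<sigma> m' i / m' i) = (\<lambda>i. act \<sigma> m i / m i)"
proof -
  obtain k where k: "\<forall>i<5. m i ^ (3 ^ k) = 1" using Dq_pow[OF m] by blast
  define P where "P = (\<Prod>i<5. m i)"
  have Pnz: "P \<noteq> 0" unfolding P_def using Dq_nz[OF m] by simp
  have Pk: "P ^ (3 ^ k) = 1" unfolding P_def prod_power_distrib using k by simp
  have "coprime (5::nat) 3" by code_simp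
  then have cop: "coprime (5::nat) (3 ^ k)" by simp
  obtain x y where xy: "5 * x = 3 ^ k * y + gcd 5 ((3::nat) ^ k)" using bezout_nat[of 5 "3 ^ k"] by auto
  then have xy: "5 * x = 3 ^ k * y + 1" using cop by simp
  define l where "l = (1 / P) ^ x"
  have iPk: "(1 / P) ^ (3 ^ k) = 1" using Pk by (simp add: power_one_over)
  have l5: "l ^ 5 = 1 / P"
  proof -
    have "l ^ 5 = (1 / P) ^ (5 * x)" unfolding l_def by (simp add: power_mult[symmetric] mult.commute)
    also have "\<dots> = ((1 / P) ^ (3 ^ k)) ^ y * (1 / P)" unfolding xy by (simp add: power_add power_mult)
    finally show ?thesis using iPk by simp
  qed
  have lk: "l ^ (3 ^ k) = 1"
  proof -
    have "l ^ (3 ^ k) = ((1 / P) ^ (3 ^ k)) ^ x" unfolding l_def by (simp add: power_mult[symmetric] mult.commute)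
    then show ?thesis using iPk by simp
  qed
  have lnz: "l \<noteq> 0" using l5 Pnz by auto
  define m' where "m' i = (if i < 5 then l * m i else 1)" for i
  have "m' \<in> Dq 5 3" unfolding Dq_def
  proof (intro CollectI conjI allI impI exI[of _ k])
    show "m' i = 1" if "5 \<le> i" for i using that by (simp add: m'_def)
    show "m' i \<noteq> 0" if "i < 5" for i using that lnz Dq_nz[OF m that] by (simp add: m'_def)
    show "m' i ^ 3 ^ k = 1" if "i < 5" for i using that lk k by (simp add: m'_def power_mult_distrib)
  qed
  moreover have "(\<Prod>i<5. m' i) = 1"
  proof -
    have "(\<Prod>i<5. m' i) = (\<Prod>i<5. l * m i)" by (simp add: m'_def)
    also have "\<dots> = l ^ 5 * P" unfolding P_def by (simp add: prod.distrib)
    finally show ?thesis using l5 Pnz by simp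
  qed
  ultimately have mX: "m' \<in> Xq 5 3" by (simp add: Xq_def)
  have "(\<lambda>i. act \<sigma> m' i / m' i) = (\<lambda>i. act \<sigma> m i / m i)" if s: "\<sigma> \<in> Alt 5" for \<sigma>
  proof
    fix i show "act \<sigma> m' i / m' i = act \<sigma> m i / m i"
    proof (cases "i < 5")
      case True
      then show ?thesis using alt_inv_in[OF s True] lnz by (simp add: act_def m'_def)
    next
      case False
      then show ?thesis using alt_inv_out[OF s False] Dq_out[OF m False] by (simp add: act_def m'_def)
    qed
  qed
  then show ?thesis using mX by blast
qed

lemma kernel_eq: "kernel GG (integer_mod_group 3) Phi = B1 (Xq 5 3) 5"
proof
  show "kernel GG (integer_mod_group 3) Phi \<subseteq> B1 (Xq 5 3) 5"
  proof
    fix f assume "f \<in> kernel GG (integer_mod_group 3) Phi"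
    then have f: "f \<in> Z1 (Xq 5 3) 5" and c: "code (f cc 4) = 0"
      by (auto simp: kernel_def GG_carrier Phi_def)
    have fc: "f cc 4 = 1" using c by (auto simp: code_def split: if_splits)
    have fD: "f \<in> Z1 (Dq (Suc 4) 3) (Suc 4)" using Z1X_D[OF f] by simp
    have mo: "mulon 4 (\<lambda>h. f h 4)" using psi_mulon[OF fD] by blast
    have triv: "\<forall>h\<in>Alt 4. f h 4 = 1"
    proof
      fix h assume h: "h \<in> Alt 4"
      show "f h 4 = 1"
        by (rule triv_from_3cycles[OF mo _ h]) (rule conj4[OF mo fc], auto)
    qed
    obtain m where m: "m \<in> Dq (Suc 4) 3" "\<forall>\<sigma>\<in>Alt (Suc 4). f \<sigma> = (\<lambda>i. act \<sigma> m i / m i)"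
      using shapiro[OF fD _ triv] by auto
    obtain m' where m': "m' \<in> Xq 5 3" "\<forall>\<sigma>\<in>Alt 5. (\<lambda>i. act \<sigma> m' i / m' i) = (\<lambda>i. act \<sigma> m i / m i)"
      using adjust m(1) by auto
    show "f \<in> B1 (Xq 5 3) 5" using to_B1[OF f m'(1)] m(2) m'(2) by simp
  qed
next
  show "B1 (Xq 5 3) 5 \<subseteq> kernel GG (integer_mod_group 3) Phi"
  proof
    fix f assume fB: "f \<in> B1 (Xq 5 3) 5"
    then obtain m where m: "m \<in> Xq 5 3" and fd: "f cc = (\<lambda>i. act cc m i / m i)"
      unfolding B1_def using cc_alt(2) by auto
    have "m 4 \<noteq> 0" using m Xq_Dq Dq_nz' by blast
    then have "f cc 4 = 1" using fd cc_inv4 by (simp add: act_def)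
    then show "f \<in> kernel GG (integer_mod_group 3) Phi"
      using B1_Xq fB by (auto simp: kernel_def GG_carrier Phi_def code_def)
  qed
qed

lemma Phi_surj: "Phi ` carrier GG = carrier (integer_mod_group 3)"
proof
  show "Phi ` carrier GG \<subseteq> carrier (integer_mod_group 3)"
    using Phi_hom unfolding hom_def by auto
next
  interpret G: group GG by (rule GG_group)
  have F: "FF \<in> carrier GG" using FF_Z1 GG_carrier by simp
  have FF2: "FF \<otimes>\<^bsub>GG\<^esub> FF \<in> carrier GG" using F by simp
  have "Phi FF = 2" using FF_c om_ne by (simp add: Phi_def code_def)
  moreover have "Phi (FF \<otimes>\<^bsub>GG\<^esub> FF) = 1"
    using Phi_hom F \<open>Phi FF = 2\<close> unfolding hom_def by simp
  moreover have "Phi \<one>\<^bsub>GG\<^esub> = 0" by (simp add: GG_one Phi_def code_def)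
  ultimately have "{0, 1, 2} \<subseteq> Phi ` carrier GG" using F FF2 G.one_closed by (metis empty_subsetI image_eqI insert_subset)
  moreover have "carrier (integer_mod_group 3) = {0, 1, 2}" by (auto simp: carrier_integer_mod_group)
  ultimately show "carrier (integer_mod_group 3) \<subseteq> Phi ` carrier GG" by simp
qed

lemma part1: "H1 (Xq 5 3) 5 \<cong> integer_mod_group 3"
proof -
  interpret gh: group_hom GG "integer_mod_group 3" Phi
    unfolding group_hom_def group_hom_axioms_def using GG_group Phi_hom by simp
  have "GG Mod kernel GG (integer_mod_group 3) Phi \<cong> integer_mod_group 3"
    by (rule gh.FactGroup_iso[OF Phi_surj])
  then show ?thesis unfolding H1_def kernel_eq .
qed

theorem lemma8p2:
  fixes p :: nat
  assumes "Factorial_Ring.prime p" and "p \<ge> 5"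
  shows "(p = 5 \<longrightarrow> H1 (Xq 5 3) 5 \<cong> integer_mod_group 3) \<and>
         (\<forall>q::nat. Factorial_Ring.prime q \<and> (p, q) \<noteq> (5, 3) \<longrightarrow> Z1 (Dq p q) p = B1 (Dq p q) p)"
  using part1 part2[OF assms] by blast

end
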